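(* Let $G$ be a DAG with $n$ nodes and $k,r,g,L$ positive integers. Suppose that every SPP pebbling strategy of $G$ with fast memory of size $k\cdot r$ uses at least $L$ I/O operations. Then every MPP pebbling strategy of $G$ with $k$ processors, fast memory size $r$ each, and I/O cost $g$ has cost at least $g\cdot L/k+n/k$.
   Context: Single-processor red-blue pebbling (SPP) with fast memory size $r$ on a DAG $G=(V,E)$: a state is a pair $(R,B)$ of subsets of $V$ (red and blue pebbles), starting with both empty. Rules: (R1-S) place a red pebble on a node carrying a blue pebble; (R2-S) place a blue pebble on a node carrying a red pebble; (R3-S) place a red pebble on a node all of whose in-neighbors carry red pebbles (in particular on any source); (R4-S) remove any pebble. At all times $|R|\le r$; a strategy must end in a state where every sink carries a pebble. Its I/O cost is the number of applications of (R1-S) and (R2-S). Multiprocessor red-blue pebbling (MPP). Input: a DAG $G=(V,E)$ with $n=|V|$ and positive integers $k$ (number of processors), $r$ (fast-memory size per processor), $g$ (cost of an I/O step). $\Delta_{in}$ denotes the maximum in-degree of $G$; sources/sinks are nodes of in-degree/out-degree $0$. A configuration is a tuple $(R^1,\dots,R^k,B)$ of subsets of $V$ ($R^j$ = nodes carrying a red pebble of processor $j$, $B$ = nodes carrying a blue pebble); it is valid if $|R^j|\le r$ for all $j$. The initial configuration has all sets empty; a configuration is terminal if every sink lies in $B\cup\bigcup_j R^j$. The transition rules are: (R1) for some $m\le k$, pairwise distinct processors $j_1,\dots,j_m$ and nodes $v_1,\dots,v_m$ with $v_i\in R^{j_i}$, add each $v_i$ to $B$ (cost $g$); (R2) for some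 $m\le k$, pairwise distinct processors $j_1,\dots,j_m$ and nodes $v_1,\dots,v_m\in B$, add each $v_i$ to $R^{j_i}$ (cost $g$); (R3) for some $m\le k$, pairwise distinct processors $j_1,\dots,j_m$ and nodes $v_1,\dots,v_m$ such that every in-neighbor of $v_i$ lies in $R^{j_i}$, add each $v_i$ to $R^{j_i}$ (cost $1$); (R4) remove a single red or blue pebble (cost $0$). A pebbling strategy is a sequence of valid configurations starting at the initial configuration and ending at a terminal one, each obtained from its predecessor by one rule; its cost is the sum of the costs of the rules applied. $\mathrm{OPT}$ denotes the minimum cost of a pebbling strategy. Applications of (R1),(R2) are called I/O steps and applications of (R3) compute steps. *)

theory Defs
  imports Complex_Main
begin

text \<open>A DAG is given by a finite node set V and an edge relation E \<subseteq> V \<times> V that is acyclic.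
  (u,v) \<in> E means u is an in-neighbor of v.\<close>

definition is_dag :: "'v set \<Rightarrow> ('v \<times> 'v) set \<Rightarrow> bool" where
  "is_dag V E \<longleftrightarrow> finite V \<and> E \<subseteq> V \<times> V \<and> acyclic E"

definition sinks :: "'v set \<Rightarrow> ('v \<times> 'v) set \<Rightarrow> 'v set" where
  "sinks V E = {v \<in> V. \<forall>w. (v, w) \<notin> E}"

datatype rule = Rule1 | Rule2 | Rule3 | Rule4

type_synonym 'v spp_conf = "'v set \<times> 'v set"  (* (R, B) *)

inductive spp_step :: "'v set \<Rightarrow> ('v \<times> 'v) set \<Rightarrow> 'v spp_conf \<Rightarrow> rule \<Rightarrow> 'v spp_conf \<Rightarrow> bool"
  for V E where
  R1S: "v \<in> B \<Longrightarrow> spp_step V E (R, B) Rule1 (insert v R, B)"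
| R2S: "v \<in> R \<Longrightarrow> spp_step V E (R, B) Rule2 (R, insert v B)"
| R3S: "v \<in> V \<Longrightarrow> (\<forall>u. (u, v) \<in> E \<longrightarrow> u \<in> R) \<Longrightarrow> spp_step V E (R, B) Rule3 (insert v R, B)"
| R4S_red: "v \<in> R \<Longrightarrow> spp_step V E (R, B) Rule4 (R - {v}, B)"
| R4S_blue: "v \<in> B \<Longrightarrow> spp_step V E (R, B) Rule4 (R, B - {v})"

definition spp_strategy :: "'v set \<Rightarrow> ('v \<times> 'v) set \<Rightarrow> nat \<Rightarrow> (rule \<times> 'v spp_conf) list \<Rightarrow> bool" where
  "spp_strategy V E r steps \<longleftrightarrow>
     (let cs = ({}, {}) # map snd steps in
       (\<forall>i < length steps. spp_step V E (cs ! i) (fst (steps ! i)) (cs ! Suc i)) \<and>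
       (\<forall>c \<in> set cs. card (fst c) \<le> r) \<and>
       (\<forall>v \<in> sinks V E. v \<in> fst (last cs) \<or> v \<in> snd (last cs)))"

definition spp_io_cost :: "(rule \<times> 'v spp_conf) list \<Rightarrow> nat" where
  "spp_io_cost steps = length (filter (\<lambda>s. fst s = Rule1 \<or> fst s = Rule2) steps)"

text \<open>Processors are 0,...,k-1; a configuration is (R, B) with R j the red pebbles of processor j.
  A simultaneous step acts on a nonempty set P of pairwise distinct processors (so m = card P \<le> k),
  processor j \<in> P acting on node vs j.\<close>

type_synonym 'v mpp_conf = "(nat \<Rightarrow> 'v set) \<times> 'v set"

definition add_reds :: "nat set \<Rightarrow> (nat \<Rightarrow> 'v) \<Rightarrow> (nat \<Rightarrow> 'v set) \<Rightarrow> (nat \<Rightarrow> 'v set)" where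
  "add_reds P vs R = (\<lambda>j. if j \<in> P then insert (vs j) (R j) else R j)"

inductive mpp_step :: "'v set \<Rightarrow> ('v \<times> 'v) set \<Rightarrow> nat \<Rightarrow> 'v mpp_conf \<Rightarrow> rule \<Rightarrow> 'v mpp_conf \<Rightarrow> bool"
  for V E k where
  R1: "P \<subseteq> {..<k} \<Longrightarrow> P \<noteq> {} \<Longrightarrow> (\<forall>j \<in> P. vs j \<in> R j) \<Longrightarrow>
       mpp_step V E k (R, B) Rule1 (R, B \<union> vs ` P)"
| R2: "P \<subseteq> {..<k} \<Longrightarrow> P \<noteq> {} \<Longrightarrow> (\<forall>j \<in> P. vs j \<in> B) \<Longrightarrow>
       mpp_step V E k (R, B) Rule2 (add_reds P vs R, B)"
| R3: "P \<subseteq> {..<k} \<Longrightarrow> P \<noteq> {} \<Longrightarrow>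
       (\<forall>j \<in> P. vs j \<in> V \<and> (\<forall>u. (u, vs j) \<in> E \<longrightarrow> u \<in> R j)) \<Longrightarrow>
       mpp_step V E k (R, B) Rule3 (add_reds P vs R, B)"
| R4_red: "j < k \<Longrightarrow> v \<in> R j \<Longrightarrow> mpp_step V E k (R, B) Rule4 (R(j := R j - {v}), B)"
| R4_blue: "v \<in> B \<Longrightarrow> mpp_step V E k (R, B) Rule4 (R, B - {v})"

definition mpp_strategy :: "'v set \<Rightarrow> ('v \<times> 'v) set \<Rightarrow> nat \<Rightarrow> nat \<Rightarrow> (rule \<times> 'v mpp_conf) list \<Rightarrow> bool" where
  "mpp_strategy V E k r steps \<longleftrightarrow>
     (let cs = ((\<lambda>_. {}), {}) # map snd steps in
       (\<forall>i < length steps. mpp_step V E k (cs ! i) (fst (steps ! i)) (cs ! Suc i)) \<and>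
       (\<forall>c \<in> set cs. \<forall>j < k. card (fst c j) \<le> r) \<and>
       (\<forall>v \<in> sinks V E. v \<in> snd (last cs) \<or> (\<exists>j < k. v \<in> fst (last cs) j)))"

fun rule_cost :: "nat \<Rightarrow> rule \<Rightarrow> nat" where
  "rule_cost g Rule1 = g"
| "rule_cost g Rule2 = g"
| "rule_cost g Rule3 = 1"
| "rule_cost g Rule4 = 0"

definition mpp_cost :: "nat \<Rightarrow> (rule \<times> 'v mpp_conf) list \<Rightarrow> nat" where
  "mpp_cost g steps = sum_list (map (\<lambda>s. rule_cost g (fst s)) steps)"

end

theory Submission
  imports Defs
begin

definition endc :: "'c \<Rightarrow> ('r \<times> 'c) list \<Rightarrow> 'c" where
  "endc c t = last (c # map snd t)"

lemma endc_Nil[simp]: "endc c [] = c" by (simp add: endc_def)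
lemma endc_Cons[simp]: "endc c (p # t) = endc (snd p) t"
  by (cases t) (simp_all add: endc_def)
lemma endc_append: "endc c (t1 @ t2) = endc (endc c t1) t2"
  by (induction t1 arbitrary: c) auto

fun srun :: "'v set \<Rightarrow> ('v \<times> 'v) set \<Rightarrow> nat \<Rightarrow> 'v spp_conf \<Rightarrow> (rule \<times> 'v spp_conf) list \<Rightarrow> bool" where
  "srun V E b c [] = True"
| "srun V E b c (p # t) = (spp_step V E c (fst p) (snd p) \<and> card (fst (snd p)) \<le> b \<and> srun V E b (snd p) t)"

lemma srun_append: "srun V E b c (t1 @ t2) = (srun V E b c t1 \<and> srun V E b (endc c t1) t2)"
  by (induction t1 arbitrary: c) auto

lemma srun_steps: "srun V E b c t \<Longrightarrow>
  (\<forall>i<length t. spp_step V E ((c # map snd t) ! i) (fst (t ! i)) ((c # map snd t) ! Suc i))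
  \<and> (\<forall>c' \<in> set (map snd t). card (fst c') \<le> b)"
proof (induction t arbitrary: c)
  case Nil then show ?case by simp
next
  case (Cons p t)
  have "srun V E b (snd p) t" using Cons.prems by simp
  from Cons.IH[OF this] Cons.prems show ?case by (auto simp: All_less_Suc2)
qed

fun mrun :: "'v set \<Rightarrow> ('v \<times> 'v) set \<Rightarrow> nat \<Rightarrow> nat \<Rightarrow> 'v mpp_conf \<Rightarrow> (rule \<times> 'v mpp_conf) list \<Rightarrow> bool" where
  "mrun V E k r c [] = True"
| "mrun V E k r c (p # t) = (mpp_step V E k c (fst p) (snd p) \<and> (\<forall>j<k. card (fst (snd p) j) \<le> r) \<and> mrun V E k r (snd p) t)"

lemma mrun_of_steps: "(\<forall>i<length t. mpp_step V E k ((c # map snd t) ! i) (fst (t ! i)) ((c # map snd t) ! Suc i))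
  \<Longrightarrow> (\<forall>c' \<in> set (map snd t). \<forall>j<k. card (fst c' j) \<le> r) \<Longrightarrow> mrun V E k r c t"
proof (induction t arbitrary: c)
  case Nil then show ?case by simp
next
  case (Cons p t)
  have "mrun V E k r (snd p) t"
    by (rule Cons.IH) (use Cons.prems in \<open>auto simp: All_less_Suc2\<close>)
  with Cons.prems show ?case by (auto simp: All_less_Suc2)
qed

definition isio :: "rule \<Rightarrow> bool" where "isio a \<longleftrightarrow> a = Rule1 \<or> a = Rule2"

lemma cost_split: "mpp_cost g s = g * length (filter (\<lambda>p. isio (fst p)) s) + length (filter (\<lambda>p. fst p = Rule3) s)"
proof (induction s)
  case Nil then show ?case by (simp add: mpp_cost_def)
next
  case (Cons p s)
  then show ?case by (cases "fst p") (auto simp: mpp_cost_def isio_def)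
qed


lemma add_red:
  assumes "finite S" "finite X"
    and "\<forall>x\<in>S. \<forall>Y. X \<subseteq> Y \<longrightarrow> spp_step V E (Y, B) a (insert x Y, B)"
    and "card (X \<union> S) \<le> bnd"
  shows "\<exists>t. srun V E bnd (X, B) t \<and> endc (X, B) t = (X \<union> S, B) \<and> (\<forall>p\<in>set t. fst p = a) \<and> length t \<le> card S"
  using assms
proof (induction S rule: finite_induct)
  case empty show ?case by (intro exI[of _ "[]"]) simp
next
  case (insert x F)
  have "card (X \<union> F) \<le> card (X \<union> insert x F)"
    by (rule card_mono) (use insert in auto)
  with insert obtain t where t: "srun V E bnd (X, B) t" "endc (X, B) t = (X \<union> F, B)"
    "\<forall>p\<in>set t. fst p = a" "length t \<le> card F" by auto
  have st: "spp_step V E (X \<union> F, B) a (insert x (X \<union> F), B)" using insert.prems by auto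
  show ?case
  proof (rule exI[of _ "t @ [(a, (insert x (X \<union> F), B))]"], intro conjI)
    show "srun V E bnd (X, B) (t @ [(a, insert x (X \<union> F), B)])"
      using t st insert.prems by (simp add: srun_append)
    show "endc (X, B) (t @ [(a, insert x (X \<union> F), B)]) = (X \<union> insert x F, B)"
      using t by (simp add: endc_append)
  qed (use t insert in auto)
qed

lemma add_blue:
  assumes "finite S" "S \<subseteq> X" "card X \<le> bnd"
  shows "\<exists>t. srun V E bnd (X, B) t \<and> endc (X, B) t = (X, B \<union> S) \<and> (\<forall>p\<in>set t. fst p = Rule2) \<and> length t \<le> card S"
  using assms
proof (induction S rule: finite_induct)
  case empty show ?case by (intro exI[of _ "[]"]) simp
next
  case (insert x F)
  with insert obtain t where t: "srun V E bnd (X, B) t" "endc (X, B) t = (X, B \<union> F)"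
    "\<forall>p\<in>set t. fst p = Rule2" "length t \<le> card F" by auto
  have st: "spp_step V E (X, B \<union> F) Rule2 (X, insert x (B \<union> F))" using insert.prems
    by (auto intro: spp_step.R2S)
  show ?case
  proof (rule exI[of _ "t @ [(Rule2, (X, insert x (B \<union> F)))]"], intro conjI)
    show "srun V E bnd (X, B) (t @ [(Rule2, (X, insert x (B \<union> F)))])"
      using t st insert.prems by (simp add: srun_append)
    show "endc (X, B) (t @ [(Rule2, (X, insert x (B \<union> F)))]) = (X, B \<union> insert x F)"
      using t by (simp add: endc_append)
  qed (use t insert in auto)
qed

definition U :: "nat \<Rightarrow> (nat \<Rightarrow> 'v set) \<Rightarrow> 'v set" where
  "U k R = (\<Union>j<k. R j)"

lemma U_add_reds: "P \<subseteq> {..<k} \<Longrightarrow> U k (add_reds P vs R) = U k R \<union> vs ` P"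
  unfolding U_def add_reds_def by (auto split: if_splits)

lemma card_U: "(\<forall>j<k. card (R j) \<le> r) \<Longrightarrow> card (U k R) \<le> k * r"
proof -
  assume a: "\<forall>j<k. card (R j) \<le> r"
  have "card (U k R) \<le> (\<Sum>j<k. card (R j))" unfolding U_def by (rule card_UN_le) simp
  also have "\<dots> \<le> (\<Sum>j<k. r)" by (rule sum_mono) (use a in auto)
  finally show ?thesis by simp
qed

lemma finite_U: "\<forall>j. finite (R j) \<Longrightarrow> finite (U k R)"
  unfolding U_def by auto

lemma cardP: "P \<subseteq> {..<k} \<Longrightarrow> card (vs ` P) \<le> k"
proof -
  assume "P \<subseteq> {..<k}"
  then have "finite P" "card P \<le> k" using finite_subset card_mono[of "{..<k}" P] by auto
  then show ?thesis using card_image_le[of P vs] by linarith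
qed

lemma step_finite: "mpp_step V E k c a c' \<Longrightarrow> \<forall>j. finite (fst c j) \<Longrightarrow> \<forall>j. finite (fst c' j)"
  by (induction rule: mpp_step.induct) (auto simp: add_reds_def)

lemma sim_step:
  assumes "mpp_step V E k (R, B) a (R', B')" "\<forall>j. finite (R j)" "card (U k R') \<le> bnd"
  shows "\<exists>t. srun V E bnd (U k R, B) t \<and> endc (U k R, B) t = (U k R', B')
     \<and> length (filter (\<lambda>p. isio (fst p)) t) \<le> (if isio a then k else 0)"
  using assms(1)
proof (cases rule: mpp_step.cases)
  case (R1 P vs)
  have sub: "vs ` P \<subseteq> U k R" using R1 unfolding U_def by auto
  have fin: "finite (vs ` P)" using R1 finite_subset by blast
  have cU: "card (U k R) \<le> bnd" using R1 assms(3) by simp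
  have "\<exists>t. srun V E bnd (U k R, B) t \<and> endc (U k R, B) t = (U k R, B \<union> vs ` P)
     \<and> (\<forall>p\<in>set t. fst p = Rule2) \<and> length t \<le> card (vs ` P)"
    by (rule add_blue[OF fin sub cU])
  then obtain t where t: "srun V E bnd (U k R, B) t" "endc (U k R, B) t = (U k R, B \<union> vs ` P)"
      "length t \<le> card (vs ` P)" by blast
  have "card (vs ` P) \<le> k" using cardP[of P k vs] R1 by blast
  with t have "length (filter (\<lambda>p. isio (fst p)) t) \<le> k"
    using length_filter_le[of "\<lambda>p. isio (fst p)" t] by linarith
  with t show ?thesis using R1 by (intro exI[of _ t]) (auto simp: isio_def)
next
  case (R2 P vs)
  have fin: "finite (vs ` P)" using R2 finite_subset by blast
  have c: "\<forall>x\<in>vs ` P. \<forall>Y. U k R \<subseteq> Y \<longrightarrow> spp_step V E (Y, B) Rule1 (insert x Y, B)"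
    using R2 by (auto intro: spp_step.R1S)
  have cU: "card (U k R \<union> vs ` P) \<le> bnd" using R2 assms(3) by (simp add: U_add_reds)
  from add_red[OF fin finite_U[OF assms(2)] c cU]
  obtain t where t: "srun V E bnd (U k R, B) t" "endc (U k R, B) t = (U k R \<union> vs ` P, B)"
      "length t \<le> card (vs ` P)" by blast
  have "card (vs ` P) \<le> k" using cardP[of P k vs] R2 by blast
  with t have "length (filter (\<lambda>p. isio (fst p)) t) \<le> k"
    using length_filter_le[of "\<lambda>p. isio (fst p)" t] by linarith
  with t show ?thesis using R2 by (intro exI[of _ t]) (auto simp: isio_def U_add_reds)
next
  case (R3 P vs)
  have fin: "finite (vs ` P)" using R3 finite_subset by blast
  have c: "\<forall>x\<in>vs ` P. \<forall>Y. U k R \<subseteq> Y \<longrightarrow> spp_step V E (Y, B) Rule3 (insert x Y, B)"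
  proof (intro ballI allI impI)
    fix x Y assume "x \<in> vs ` P" "U k R \<subseteq> Y"
    then obtain j where j: "j \<in> P" "x = vs j" by auto
    then have "j < k" using R3 by auto
    then show "spp_step V E (Y, B) Rule3 (insert x Y, B)"
    proof (intro spp_step.R3S)
      show "x \<in> V" using R3 j by auto
      show "\<forall>u. (u, x) \<in> E \<longrightarrow> u \<in> Y"
      proof (intro allI impI)
        fix u assume "(u, x) \<in> E"
        then have "u \<in> R j" using R3 j by auto
        then have "u \<in> U k R" using \<open>j < k\<close> unfolding U_def by auto
        then show "u \<in> Y" using \<open>U k R \<subseteq> Y\<close> by auto
      qed
    qed
  qed
  have cU: "card (U k R \<union> vs ` P) \<le> bnd" using R3 assms(3) by (simp add: U_add_reds)
  from add_red[OF fin finite_U[OF assms(2)] c cU]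
  obtain t where t: "srun V E bnd (U k R, B) t" "endc (U k R, B) t = (U k R \<union> vs ` P, B)"
      "\<forall>p\<in>set t. fst p = Rule3" by (auto simp: U_add_reds)
  then have "filter (\<lambda>p. isio (fst p)) t = []" by (auto simp: isio_def filter_empty_conv)
  then show ?thesis using R3 t by (intro exI[of _ t]) (auto simp: isio_def U_add_reds)
next
  case (R4_red j v)
  show ?thesis
  proof (cases "v \<in> U k R'")
    case True
    then have "U k R' = U k R" using R4_red unfolding U_def by (auto split: if_splits)
    then show ?thesis using R4_red by (intro exI[of _ "[]"]) (auto simp: isio_def)
  next
    case False
    then have e: "U k R' = U k R - {v}" using R4_red unfolding U_def by (auto split: if_splits)
    have "v \<in> U k R" using R4_red unfolding U_def by auto
    then have "spp_step V E (U k R, B) Rule4 (U k R - {v}, B)" by (rule spp_step.R4S_red)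
    then show ?thesis using R4_red e assms(3)
      by (intro exI[of _ "[(Rule4, (U k R - {v}, B))]"]) (auto simp: isio_def)
  qed
next
  case (R4_blue v)
  then have "spp_step V E (U k R, B) Rule4 (U k R, B - {v})" by (intro spp_step.R4S_blue)
  then show ?thesis using R4_blue assms(3)
    by (intro exI[of _ "[(Rule4, (U k R, B - {v}))]"]) (auto simp: isio_def)
qed


lemma sim:
  "mrun V E k r c s \<Longrightarrow> \<forall>j. finite (fst c j) \<Longrightarrow>
   \<exists>t. srun V E (k*r) (U k (fst c), snd c) t \<and>
       endc (U k (fst c), snd c) t = (U k (fst (endc c s)), snd (endc c s)) \<and>
       length (filter (\<lambda>p. isio (fst p)) t) \<le> k * length (filter (\<lambda>p. isio (fst p)) s)"
proof (induction s arbitrary: c)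
  case Nil then show ?case by (intro exI[of _ "[]"]) simp
next
  case (Cons p s)
  obtain R B where c: "c = (R, B)" by (cases c)
  obtain a R' B' where p: "p = (a, (R', B'))" by (cases p) auto
  have st: "mpp_step V E k (R, B) a (R', B')" and cr: "\<forall>j<k. card (R' j) \<le> r"
    and mr: "mrun V E k r (R', B') s" using Cons.prems c p by auto
  have fin: "\<forall>j. finite (R j)" using Cons.prems c by auto
  have fin': "\<forall>j. finite (R' j)" using step_finite[OF st] fin by auto
  obtain t1 where t1: "srun V E (k*r) (U k R, B) t1" "endc (U k R, B) t1 = (U k R', B')"
     "length (filter (\<lambda>p. isio (fst p)) t1) \<le> (if isio a then k else 0)"
    using sim_step[OF st fin card_U[OF cr]] by blast
  obtain t2 where t2: "srun V E (k*r) (U k R', B') t2"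
     "endc (U k R', B') t2 = (U k (fst (endc (R', B') s)), snd (endc (R', B') s))"
     "length (filter (\<lambda>p. isio (fst p)) t2) \<le> k * length (filter (\<lambda>p. isio (fst p)) s)"
    using Cons.IH[OF mr] fin' by auto
  show ?case
  proof (intro exI[of _ "t1 @ t2"] conjI)
    show "srun V E (k * r) (U k (fst c), snd c) (t1 @ t2)"
      using t1 t2 c by (simp add: srun_append)
    show "endc (U k (fst c), snd c) (t1 @ t2) = (U k (fst (endc c (p # s))), snd (endc c (p # s)))"
      using t1 t2 c p by (simp add: endc_append)
    show "length (filter (\<lambda>p. isio (fst p)) (t1 @ t2)) \<le> k * length (filter (\<lambda>p. isio (fst p)) (p # s))"
      using t1(3) t2(3) p by (auto split: if_splits)
  qed
qed

definition peb :: "(nat \<Rightarrow> 'v set) \<Rightarrow> 'v set \<Rightarrow> 'v set" where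
  "peb R B = (\<Union>j. R j) \<union> B"

definition newc :: "rule \<Rightarrow> (nat \<Rightarrow> 'v set) \<Rightarrow> (nat \<Rightarrow> 'v set) \<Rightarrow> 'v set" where
  "newc a R R' = (if a = Rule3 then (\<Union>j. R' j - R j) else {})"

fun comp :: "'v mpp_conf \<Rightarrow> (rule \<times> 'v mpp_conf) list \<Rightarrow> 'v set" where
  "comp c [] = {}"
| "comp c (p # s) = newc (fst p) (fst c) (fst (snd p)) \<union> comp (snd p) s"


lemma step_B1:
  assumes "mpp_step V E k (R, B) a (R', B')"
  shows "peb R' B' \<subseteq> peb R B \<union> newc a R R'"
  using assms
proof (cases rule: mpp_step.cases)
  case (R1 P vs) then show ?thesis by (auto simp: peb_def)
next
  case (R2 P vs) then show ?thesis by (auto simp: peb_def add_reds_def split: if_splits)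
next
  case (R3 P vs) then show ?thesis by (auto simp: peb_def newc_def add_reds_def split: if_splits)
next
  case (R4_red j v) then show ?thesis by (auto simp: peb_def split: if_splits)
next
  case (R4_blue v) then show ?thesis by (auto simp: peb_def)
qed

lemma step_B2:
  assumes "mpp_step V E k (R, B) a (R', B')"
  shows "finite (newc a R R') \<and> card (newc a R R') \<le> k"
  using assms
proof (cases rule: mpp_step.cases)
  case (R3 P vs)
  have sub: "newc a R R' \<subseteq> vs ` P" using R3 by (auto simp: newc_def add_reds_def split: if_splits)
  have fin: "finite (vs ` P)" using R3 finite_subset by blast
  show ?thesis using sub fin cardP[of P k vs] R3 card_mono[OF fin sub]
      by (auto intro: finite_subset)
qed (simp_all add: newc_def)

lemma step_B3:
  assumes "mpp_step V E k (R, B) a (R', B')"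
  shows "\<forall>v\<in>newc a R R'. \<forall>u. (u, v) \<in> E \<longrightarrow> u \<in> peb R B"
  using assms
proof (cases rule: mpp_step.cases)
  case (R3 P vs)
  show ?thesis
  proof (intro ballI allI impI)
    fix v u assume "v \<in> newc a R R'" "(u, v) \<in> E"
    then obtain j where "j \<in> P" "v = vs j" using R3
      by (auto simp: newc_def add_reds_def split: if_splits)
    then show "u \<in> peb R B" using R3 \<open>(u, v) \<in> E\<close> by (auto simp: peb_def)
  qed
qed (simp_all add: newc_def)


lemma B_run:
  "mrun V E k r c s \<Longrightarrow>
   peb (fst (endc c s)) (snd (endc c s)) \<subseteq> peb (fst c) (snd c) \<union> comp c s
   \<and> (\<forall>v\<in>comp c s. \<forall>u. (u,v)\<in>E \<longrightarrow> u \<in> peb (fst c) (snd c) \<union> comp c s)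
   \<and> finite (comp c s) \<and> card (comp c s) \<le> k * length (filter (\<lambda>p. fst p = Rule3) s)"
proof (induction s arbitrary: c)
  case Nil then show ?case by simp
next
  case (Cons p s)
  obtain R B where c: "c = (R, B)" by (cases c)
  obtain a R' B' where p: "p = (a, (R', B'))" by (cases p) auto
  have st: "mpp_step V E k (R, B) a (R', B')"
    and mr: "mrun V E k r (R', B') s" using Cons.prems c p by auto
  note IH = Cons.IH[OF mr]
  note b1 = step_B1[OF st] and b2 = step_B2[OF st] and b3 = step_B3[OF st]
  have ceq: "comp c (p # s) = newc a R R' \<union> comp (R', B') s" using c p by simp
  have "card (comp c (p # s)) \<le> card (newc a R R') + card (comp (R', B') s)"
    unfolding ceq by (rule card_Un_le)
  moreover have "card (newc a R R') \<le> (if a = Rule3 then k else 0)"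
    using b2 by (cases "a = Rule3") (auto simp: newc_def)
  ultimately have card: "card (comp c (p # s)) \<le> k * length (filter (\<lambda>p. fst p = Rule3) (p # s))"
    using IH p by (auto split: if_splits)
  show ?case
  proof (intro conjI)
    show "peb (fst (endc c (p # s))) (snd (endc c (p # s))) \<subseteq> peb (fst c) (snd c) \<union> comp c (p # s)"
      using IH b1 c p by auto
    show "\<forall>v\<in>comp c (p # s). \<forall>u. (u, v) \<in> E \<longrightarrow> u \<in> peb (fst c) (snd c) \<union> comp c (p # s)"
      using IH b1 b3 c p by fastforce
    show "finite (comp c (p # s))" using IH b2 ceq by simp
  qed (rule card)
qed

theorem corollary6:
  fixes V :: "'v set" and E :: "('v \<times> 'v) set" and k r g L :: nat
    and s :: "(rule \<times> 'v mpp_conf) list"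
  assumes "is_dag V E"
    and "k > 0" and "r > 0" and "g > 0" and "L > 0"
    and "\<forall>t. spp_strategy V E (k * r) t \<longrightarrow> L \<le> spp_io_cost t"
    and "mpp_strategy V E k r s"
  shows "real g * real L / real k + real (card V) / real k \<le> real (mpp_cost g s)"
proof -
  define c0 :: "'v mpp_conf" where "c0 = ((\<lambda>_. {}), {})"
  define cf where "cf = endc c0 s"
  have lastcs: "last (c0 # map snd s) = cf" unfolding cf_def endc_def ..
  have ms: "mrun V E k r c0 s"
    using assms(7) unfolding mpp_strategy_def Let_def c0_def by (intro mrun_of_steps) auto
  have termc: "\<forall>v\<in>sinks V E. v \<in> snd cf \<or> (\<exists>j<k. v \<in> fst cf j)"
    using assms(7) lastcs unfolding mpp_strategy_def Let_def c0_def by auto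
  define nio where "nio = length (filter (\<lambda>p. isio (fst p)) s)"
  define nc where "nc = length (filter (\<lambda>p. fst p = Rule3) s)"
  obtain t where t: "srun V E (k*r) (U k (fst c0), snd c0) t"
     "endc (U k (fst c0), snd c0) t = (U k (fst cf), snd cf)"
     "length (filter (\<lambda>p. isio (fst p)) t) \<le> k * nio"
    using sim[OF ms] unfolding cf_def nio_def c0_def by auto
  have U0: "(U k (fst c0), snd c0) = ({}, {})" unfolding U_def c0_def by simp
  have "spp_strategy V E (k * r) t"
  proof -
    have ss: "srun V E (k*r) ({}, {}) t" using t(1) U0 by simp
    have e: "last (({}, {}) # map snd t) = (U k (fst cf), snd cf)"
      using t(2) U0 unfolding endc_def by simp
    show ?thesis using srun_steps[OF ss] termc e unfolding spp_strategy_def Let_def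
      by (auto simp: U_def)
  qed
  then have "L \<le> spp_io_cost t" using assms(6) by blast
  also have "spp_io_cost t = length (filter (\<lambda>p. isio (fst p)) t)"
    unfolding spp_io_cost_def isio_def ..
  finally have A: "L \<le> k * nio" using t(3) by linarith
  note BR = B_run[OF ms]
  define C where "C = comp c0 s"
  have pe0: "peb (fst c0) (snd c0) = {}" unfolding peb_def c0_def by simp
  have closed: "\<forall>v\<in>C. \<forall>u. (u,v)\<in>E \<longrightarrow> u \<in> C" using BR pe0 unfolding C_def by auto
  have finC: "finite C" and cardC: "card C \<le> k * nc" using BR unfolding C_def nc_def by auto
  have sinksC: "sinks V E \<subseteq> C"
  proof
    fix v assume "v \<in> sinks V E"
    then have "v \<in> peb (fst cf) (snd cf)" using termc unfolding peb_def by auto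
    then show "v \<in> C" using BR pe0 unfolding C_def cf_def by auto
  qed
  have dag: "finite V" "E \<subseteq> V \<times> V" "acyclic E" using assms(1) unfolding is_dag_def by auto
  have finE: "finite E" using dag finite_subset by blast
  have wf: "wf (E\<inverse>)" using finite_acyclic_wf_converse[OF finE dag(3)] .
  have "\<forall>v. v \<in> V \<longrightarrow> v \<in> C"
  proof (intro allI)
    fix v show "v \<in> V \<longrightarrow> v \<in> C"
    proof (induction v rule: wf_induct[OF wf])
      case (1 v)
      show ?case
      proof
        assume vV: "v \<in> V"
        show "v \<in> C"
        proof (cases "v \<in> sinks V E")
          case True then show ?thesis using sinksC by auto
        next
          case False
          then obtain w where w: "(v, w) \<in> E" using vV unfolding sinks_def by auto
          then have "w \<in> V" using dag by auto
          then have "w \<in> C" using 1 w by auto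
          then show ?thesis using closed w by auto
        qed
      qed
    qed
  qed
  then have "V \<subseteq> C" by auto
  then have B: "card V \<le> k * nc" using card_mono[OF finC] cardC by (meson order_trans)
  have cost: "mpp_cost g s = g * nio + nc" unfolding nio_def nc_def by (rule cost_split)
  have "g * L + card V \<le> k * mpp_cost g s"
  proof -
    have "g * L \<le> g * (k * nio)" using A by (rule mult_le_mono2)
    then have "g * L + card V \<le> g * (k * nio) + k * nc" using B by linarith
    also have "\<dots> = k * mpp_cost g s" using cost by (simp add: algebra_simps)
    finally show ?thesis .
  qed
  then have "real g * real L + real (card V) \<le> real k * real (mpp_cost g s)"
    by (metis of_nat_add of_nat_le_iff of_nat_mult)
  then show ?thesis using assms(2) by (simp add: field_simps add_divide_distrib[symmetric])
qed

end
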